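(* Let $G$ be a group, written multiplicatively, with more than $3$ elements, and let $F=G\cup\{0\}$ be the hyperfield with multiplication extending that of $G$ by $x\cdot 0=0\cdot x=0$ and hyperaddition given by $x+y=F\setminus\{0,x,y\}$ for distinct $x,y\in G$, $x+x=\{0,x\}$ for $x\in G$, and $x+0=0+x=\{x\}$ for $x\in F$. Suppose $|F|\ge 6$, and let $x,y,z$ be three distinct nonzero elements of $F$. Then $x+y+z=F$.
   Context: For subsets $A,B\subseteq F$ one sets $A+B=\bigcup_{a\in A,b\in B}(a+b)$, identifying an element with the singleton containing it; thus $x+y+z=(x+y)+z$. *)

theory Defs
  imports "HOL-Algebra.Group"
begin

text \<open>The hyperfield F = G \<union> {0} is modelled as the option type over the carrier of G:
  None plays the role of 0, Some g the element g of G.\<close>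

definition hfield :: "('a, 'b) monoid_scheme \<Rightarrow> 'a option set" where
  "hfield G = {None} \<union> Some ` carrier G"

definition hmult :: "('a, 'b) monoid_scheme \<Rightarrow> 'a option \<Rightarrow> 'a option \<Rightarrow> 'a option" where
  "hmult G x y = (case (x, y) of (Some a, Some b) \<Rightarrow> Some (a \<otimes>\<^bsub>G\<^esub> b) | _ \<Rightarrow> None)"

definition hadd :: "('a, 'b) monoid_scheme \<Rightarrow> 'a option \<Rightarrow> 'a option \<Rightarrow> 'a option set" where
  "hadd G x y =
     (if y = None then {x}
      else if x = None then {y}
      else if x = y then {None, x}
      else hfield G - {None, x, y})"

definition hsum :: "('a, 'b) monoid_scheme \<Rightarrow> 'a option set \<Rightarrow> 'a option set \<Rightarrow> 'a option set" where
  "hsum G A B = (\<Union>a\<in>A. \<Union>b\<in>B. hadd G a b)"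

end

theory Submission
  imports Defs
begin

lemma hadd_sub: "a \<in> hfield G \<Longrightarrow> b \<in> hfield G \<Longrightarrow> hadd G a b \<subseteq> hfield G"
  unfolding hadd_def hfield_def by auto

lemma two_others:
  assumes "infinite (hfield G) \<or> card (hfield G) \<ge> 6"
  shows "\<exists>w1 w2. w1 \<in> hfield G - {None,x,y,z} \<and> w2 \<in> hfield G - {None,x,y,z} \<and> w1 \<noteq> w2"
proof (rule ccontr)
  assume n: "\<not> ?thesis"
  have "\<exists>w. hfield G \<subseteq> {None,x,y,z,w}"
  proof (cases "hfield G - {None,x,y,z} = {}")
    case True then show ?thesis by blast
  next
    case False
    then obtain w where w: "w \<in> hfield G - {None,x,y,z}" by blast
    have "hfield G \<subseteq> {None,x,y,z,w}" using n w by blast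
    then show ?thesis by blast
  qed
  then obtain w where s: "hfield G \<subseteq> {None,x,y,z,w}" by blast
  have "finite (hfield G)" using s finite_subset by blast
  moreover have "card (hfield G) \<le> card {None,x,y,z,w}" using s by (intro card_mono) auto
  moreover have "card {None,x,y,z,w} \<le> 5"
    using card_length[of "[None,x,y,z,w]"] by simp
  ultimately show False using assms by linarith
qed

theorem mainTheorem4:
  fixes G :: "('a, 'b) monoid_scheme" and x y z :: "'a option"
  assumes "group G"
    and "infinite (carrier G) \<or> card (carrier G) > 3"
    and "infinite (hfield G) \<or> card (hfield G) \<ge> 6"
    and "x \<in> hfield G" and "y \<in> hfield G" and "z \<in> hfield G"
    and "x \<noteq> None" and "y \<noteq> None" and "z \<noteq> None"
    and "x \<noteq> y" and "y \<noteq> z" and "x \<noteq> z"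
  shows "hsum G (hsum G {x} {y}) {z} = hfield G"
proof
  have xy: "hsum G {x} {y} = hfield G - {None, x, y}"
    using assms unfolding hsum_def hadd_def by auto
  show "hsum G (hsum G {x} {y}) {z} \<subseteq> hfield G"
  proof -
    have "\<forall>a\<in>hsum G {x} {y}. a \<in> hfield G" using xy by blast
    then show ?thesis unfolding hsum_def[of G "hsum G {x} {y}" "{z}"]
      by (intro UN_least) (simp add: hadd_sub assms(6))
  qed
  obtain w1 w2 where w: "w1 \<in> hfield G - {None,x,y,z}" "w2 \<in> hfield G - {None,x,y,z}" "w1 \<noteq> w2"
    using two_others[OF assms(3), of x y z] by (elim exE conjE) blast
  have zz: "hadd G z z = {None, z}" unfolding hadd_def using assms(9) by simp
  have n1: "w1 \<noteq> None" "w1 \<noteq> z" "w2 \<noteq> None" "w2 \<noteq> z" using w(1,2) by auto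
  have h1: "hadd G w1 z = hfield G - {None, w1, z}" using assms(9) n1 by (simp add: hadd_def del: not_None_eq)
  have h2: "hadd G w2 z = hfield G - {None, w2, z}" using assms(9) n1 by (simp add: hadd_def del: not_None_eq)
  have sub: "hadd G a z \<subseteq> hsum G (hsum G {x} {y}) {z}" if "a \<in> hsum G {x} {y}" for a
    using that unfolding hsum_def[of G "hsum G {x} {y}" "{z}"] by blast
  have m: "z \<in> hsum G {x} {y}" "w1 \<in> hsum G {x} {y}" "w2 \<in> hsum G {x} {y}"
    unfolding xy using w assms(6,9,11,12) by auto
  have "hadd G z z \<union> hadd G w1 z \<union> hadd G w2 z \<subseteq> hsum G (hsum G {x} {y}) {z}"
    using sub[OF m(1)] sub[OF m(2)] sub[OF m(3)] by blast
  moreover have "hfield G \<subseteq> hadd G z z \<union> hadd G w1 z \<union> hadd G w2 z"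
    unfolding zz h1 h2 using w(3) by blast
  ultimately show "hfield G \<subseteq> hsum G (hsum G {x} {y}) {z}" by blast
qed

end
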